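(* Let $V$ be a finite-dimensional vector space over $\mathbb{F}_2$ with nondegenerate quadratic form $Q$ and associated bilinear form $B$. Let $W$ be a subspace of $V$ of dimension $d\ge 2$ with $d\equiv 2\pmod 4$ such that $W$ has a symmetric basis (with respect to the restriction of $Q$). Suppose $\{a,b\},\{c,d'\},\{g,h\}$ are three hyperbolic pairs contained in $W^{\perp}\setminus W$ which are pairwise perpendicular (every vector of one pair is orthogonal under $B$ to every vector of each other pair). Let $W'=W\perp\langle a,b\rangle\perp\langle c,d'\rangle\perp\langle g,h\rangle$. Then $W'$ has a symmetric basis.
   Context: The associated bilinear form of $Q$ is $B(u,v)=Q(u+v)-Q(u)-Q(v)$. $W^\perp=\{v\in V: B(w,v)=0\ \forall w\in W\}$. A pair $\{u,v\}$ of distinct vectors is a hyperbolic pair if $Q(u)=Q(v)=0$ and $B(u,v)=1$. A basis $\{v_1,\dots,v_m\}$ of a subspace is symmetric if $Q(v_i)=0$ for all $i$ and $B(v_i,v_j)=1$ for all $i\ne j$. *)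

theory Defs
  imports Complex_Main "HOL-Library.Z2"
begin

text \<open>Vector spaces over the field F_2 are modelled with the library type bit
  (HOL-Library.Z2) as scalar field and the library locale vector_space.\<close>

definition polar :: "('v::ab_group_add \<Rightarrow> bit) \<Rightarrow> 'v \<Rightarrow> 'v \<Rightarrow> bit" where
  "polar Q u v = Q (u + v) - Q u - Q v"

definition quadratic_form :: "(bit \<Rightarrow> 'v::ab_group_add \<Rightarrow> 'v) \<Rightarrow> ('v \<Rightarrow> bit) \<Rightarrow> bool" where
  "quadratic_form scale Q \<longleftrightarrow>
     (\<forall>c x. Q (scale c x) = c ^ 2 * Q x) \<and>
     (\<forall>u v w. polar Q (u + v) w = polar Q u w + polar Q v w) \<and>
     (\<forall>c u v. polar Q (scale c u) v = c * polar Q u v)"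

definition nondegenerate :: "('v::ab_group_add \<Rightarrow> bit) \<Rightarrow> bool" where
  "nondegenerate Q \<longleftrightarrow> (\<forall>v. (\<forall>u. polar Q u v = 0) \<longrightarrow> v = 0)"

definition perp :: "('v::ab_group_add \<Rightarrow> bit) \<Rightarrow> 'v set \<Rightarrow> 'v set" where
  "perp Q W = {v. \<forall>w\<in>W. polar Q w v = 0}"

definition hyperbolic_pair :: "('v::ab_group_add \<Rightarrow> bit) \<Rightarrow> 'v \<Rightarrow> 'v \<Rightarrow> bool" where
  "hyperbolic_pair Q u v \<longleftrightarrow> u \<noteq> v \<and> Q u = 0 \<and> Q v = 0 \<and> polar Q u v = 1"

definition symmetric_basis ::
  "(bit \<Rightarrow> 'v::ab_group_add \<Rightarrow> 'v) \<Rightarrow> ('v \<Rightarrow> bit) \<Rightarrow> 'v set \<Rightarrow> 'v set \<Rightarrow> bool" where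
  "symmetric_basis scale Q W S \<longleftrightarrow>
     \<not> module.dependent scale S \<and> module.span scale S = W \<and>
     (\<forall>v\<in>S. Q v = 0) \<and> (\<forall>u\<in>S. \<forall>v\<in>S. u \<noteq> v \<longrightarrow> polar Q u v = 1)"

definition has_symmetric_basis ::
  "(bit \<Rightarrow> 'v::ab_group_add \<Rightarrow> 'v) \<Rightarrow> ('v \<Rightarrow> bit) \<Rightarrow> 'v set \<Rightarrow> bool" where
  "has_symmetric_basis scale Q W \<longleftrightarrow> (\<exists>S. symmetric_basis scale Q W S)"

end

theory Submission
  imports Defs
begin

lemma bit_aux: "(a::bit) = b + c + (a - b - c)"
  by (cases a; cases b; cases c) simp_all

lemma bit_aux2: "(a::bit) - b - b = a"
  by (cases a; cases b) simp_all

lemma of_nat_bit: "(of_nat n :: bit) = (if even n then 0 else 1)"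
  by (induction n) auto

locale q2 = vector_space scale for scale :: "bit \<Rightarrow> 'v::ab_group_add \<Rightarrow> 'v" +
  fixes Q :: "'v \<Rightarrow> bit"
  assumes qf: "quadratic_form scale Q"
begin

lemma two0: "x + x = (0::'v)"
proof -
  have "x + x = scale 1 x + scale 1 x" by simp
  also have "\<dots> = scale (1+1) x" by (simp only: scale_left_distrib)
  also have "\<dots> = 0" by simp
  finally show ?thesis .
qed

lemma cancel1: "x + (x + y) = (y::'v)"
  by (simp add: add.assoc[symmetric] two0)

lemma Q0: "Q 0 = 0"
proof -
  have "Q (scale 0 0) = 0^2 * Q 0" using qf unfolding quadratic_form_def by blast
  then show ?thesis by simp
qed

lemma Qadd: "Q (u + v) = Q u + Q v + polar Q u v"
  unfolding polar_def by (rule bit_aux)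

lemma polar_sym: "polar Q u v = polar Q v u"
  unfolding polar_def by (metis add.commute diff_right_commute)

lemma polar_self: "polar Q x x = 0"
  unfolding polar_def by (simp only: bit_aux2 two0 Q0)

lemma polar_addL: "polar Q (u + v) w = polar Q u w + polar Q v w"
  using qf unfolding quadratic_form_def by blast

lemma polar_addR: "polar Q w (u + v) = polar Q w u + polar Q w v"
  using polar_addL polar_sym by metis

lemma polar_zeroR: "polar Q t 0 = 0"
  unfolding polar_def by (simp add: Q0)

lemma polar_sumR: "polar Q t (sum f T) = (\<Sum>u\<in>T. polar Q t (f u))"
proof (cases "finite T")
  case True
  then show ?thesis by (induction T rule: finite_induct) (simp_all add: polar_zeroR polar_addR)
next
  case False
  then show ?thesis by (simp add: polar_zeroR)
qed

lemma polar_sum_gram: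
  assumes "finite T" "T \<subseteq> S" "t \<in> S" "\<forall>u\<in>S. \<forall>v\<in>S. u \<noteq> v \<longrightarrow> polar Q u v = 1"
  shows "polar Q t (sum id T) = of_nat (card (T - {t}))"
proof -
  have "polar Q t (sum id T) = (\<Sum>u\<in>T. polar Q t u)" by (simp add: polar_sumR)
  also have "\<dots> = (\<Sum>u\<in>T - {t}. polar Q t u)"
  proof (cases "t \<in> T")
    case True
    then show ?thesis using assms(1) by (simp add: sum.remove polar_self)
  next
    case False
    then show ?thesis by simp
  qed
  also have "\<dots> = (\<Sum>u\<in>T - {t}. 1)"
    by (rule sum.cong) (use assms in auto)
  also have "\<dots> = of_nat (card (T - {t}))" by simp
  finally show ?thesis .
qed

lemma even_gram:
  assumes fin: "finite S" and ev: "even (card S)"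
    and gr: "\<forall>u\<in>S. \<forall>v\<in>S. u \<noteq> v \<longrightarrow> polar Q u v = 1"
    and TS: "T \<subseteq> S" and z: "\<forall>t\<in>S. polar Q t (sum id T) = 0"
  shows "T = {}"
proof (rule ccontr)
  assume ne: "T \<noteq> {}"
  have fT: "finite T" using fin TS finite_subset by blast
  have k: "even (card (T - {t}))" if "t \<in> S" for t
    using z that polar_sum_gram[OF fT TS that gr] by (simp add: of_nat_bit split: if_splits)
  obtain t where t: "t \<in> T" using ne by blast
  have "even (card T - 1)" using k[of t] t TS by (auto simp: card_Diff_singleton fT)
  moreover have "card T \<ge> 1" using fT ne by (simp add: Suc_le_eq card_gt_0_iff)
  ultimately have oT: "odd (card T)" by (cases "card T") auto
  show False
  proof (cases "T = S")
    case True
    then show ?thesis using oT ev by simp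
  next
    case False
    then obtain t' where "t' \<in> S" "t' \<notin> T" using TS by blast
    then show ?thesis using k[of t'] oT by simp
  qed
qed

lemma sum_scale_subset:
  assumes "finite S"
  shows "(\<Sum>v\<in>S. scale (u v) v) = sum id {v\<in>S. u v = 1}"
proof -
  have "(\<Sum>v\<in>S. scale (u v) v) = (\<Sum>v\<in>S. if u v = 1 then id v else 0)"
    by (intro sum.cong refl) (metis (full_types) bit_not_one_iff scale_one scale_zero_left id_apply)
  also have "\<dots> = sum id {v\<in>S. u v = 1}" using assms by (subst sum.inter_filter) auto
  finally show ?thesis .
qed

lemma rad0:
  assumes fin: "finite S" and ev: "even (card S)"
    and gr: "\<forall>u\<in>S. \<forall>v\<in>S. u \<noteq> v \<longrightarrow> polar Q u v = 1"
    and y: "y \<in> span S" and z: "\<forall>t\<in>S. polar Q t y = 0"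
  shows "y = 0"
proof -
  obtain u where "y = (\<Sum>v\<in>S. scale (u v) v)" using y span_finite[OF fin] by auto
  then have yT: "y = sum id {v\<in>S. u v = 1}" using sum_scale_subset[OF fin] by simp
  have "{v\<in>S. u v = 1} = {}"
  proof (rule even_gram[OF fin ev gr])
    show "{v\<in>S. u v = 1} \<subseteq> S" by auto
    show "\<forall>t\<in>S. polar Q t (sum id {v\<in>S. u v = 1}) = 0" using z by (simp only: yT)
  qed
  then show ?thesis using yT by (metis sum.empty)
qed

lemma indep:
  assumes fin: "finite S" and ev: "even (card S)"
    and gr: "\<forall>u\<in>S. \<forall>v\<in>S. u \<noteq> v \<longrightarrow> polar Q u v = 1"
  shows "\<not> dependent S"
proof
  assume "dependent S"
  then obtain u where u: "\<exists>v\<in>S. u v \<noteq> 0" "(\<Sum>v\<in>S. scale (u v) v) = 0"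
    using dependent_finite[OF fin] by blast
  then have s0: "sum id {v\<in>S. u v = 1} = 0" using sum_scale_subset[OF fin] by simp
  have "{v\<in>S. u v = 1} = {}"
  proof (rule even_gram[OF fin ev gr])
    show "{v\<in>S. u v = 1} \<subseteq> S" by auto
    show "\<forall>t\<in>S. polar Q t (sum id {v\<in>S. u v = 1}) = 0" using s0 polar_zeroR by simp
  qed
  then show False using u(1) by auto
qed

lemma Q_sum_gram:
  assumes "finite T" "\<forall>t\<in>T. Q t = 0" "\<forall>u\<in>T. \<forall>v\<in>T. u \<noteq> v \<longrightarrow> polar Q u v = 1"
  shows "Q (sum id T) = of_nat (card T choose 2)"
  using assms
proof (induction T rule: finite_induct)
  case empty
  then show ?case by (simp add: Q0 numeral_2_eq_2)
next
  case (insert x F)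
  have "polar Q x (sum id F) = of_nat (card (F - {x}))"
    by (rule polar_sum_gram[of F "insert x F"]) (use insert in auto)
  then have "Q (sum id (insert x F)) = of_nat (card F choose 2) + of_nat (card F)"
    using insert by (simp add: Qadd)
  also have "\<dots> = of_nat (card (insert x F) choose 2)"
    using insert by (simp add: numeral_2_eq_2 del: add_bit_eq_xor)
  finally show ?case .
qed

end


lemma odd_choose2:
  assumes "n mod 4 = (2::nat)"
  shows "odd (n choose 2)"
proof -
  obtain k where n: "n = 4*k+2" using assms by (metis div_mult_mod_eq mult.commute)
  have "n * (n - 1) = 2 * ((2*k+1)*(4*k+1))" unfolding n by (simp add: algebra_simps)
  then have "n choose 2 = (2*k+1)*(4*k+1)" by (simp add: choose_two)
  then show ?thesis by simp
qed

lemma (in q2) polar1_neq: "polar Q u v = 1 \<Longrightarrow> u \<noteq> v"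
  using polar_self by auto

theorem lemma3p2:
  fixes scale :: "bit \<Rightarrow> 'v::ab_group_add \<Rightarrow> 'v"
    and Basis :: "'v set"
    and Q :: "'v \<Rightarrow> bit"
    and W :: "'v set"
    and a b c d' g h :: 'v
  assumes fd: "finite_dimensional_vector_space scale Basis"
    and qf: "quadratic_form scale Q"
    and nd: "nondegenerate Q"
    and sub: "module.subspace scale W"
    and dim2: "vector_space.dim scale W \<ge> 2"
    and dimmod: "vector_space.dim scale W mod 4 = 2"
    and symW: "has_symmetric_basis scale Q W"
    and hp1: "hyperbolic_pair Q a b"
    and hp2: "hyperbolic_pair Q c d'"
    and hp3: "hyperbolic_pair Q g h"
    and inperp: "{a, b, c, d', g, h} \<subseteq> perp Q W - W"
    and perp12: "\<forall>x\<in>{a, b}. \<forall>y\<in>{c, d'}. polar Q x y = 0"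
    and perp13: "\<forall>x\<in>{a, b}. \<forall>y\<in>{g, h}. polar Q x y = 0"
    and perp23: "\<forall>x\<in>{c, d'}. \<forall>y\<in>{g, h}. polar Q x y = 0"
  shows "has_symmetric_basis scale Q (module.span scale (W \<union> {a, b, c, d', g, h}))"
proof -
  have vs: "vector_space scale" using fd unfolding finite_dimensional_vector_space_def by blast
  interpret q2 scale Q by (intro q2.intro q2_axioms.intro vs qf)
  obtain SW where SWb: "symmetric_basis scale Q W SW" using symW has_symmetric_basis_def by blast
  have indSW: "\<not> dependent SW" and spanSW: "span SW = W" and QSW: "\<forall>v\<in>SW. Q v = 0"
    and grSW: "\<forall>u\<in>SW. \<forall>v\<in>SW. u \<noteq> v \<longrightarrow> polar Q u v = 1"
    using SWb unfolding symmetric_basis_def by auto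
  have cardSW: "card SW = dim W" using dim_span_eq_card_independent[OF indSW] spanSW by simp
  have finSW: "finite SW" using cardSW dim2 card.infinite by fastforce
  have m4: "card SW mod 4 = 2" using cardSW dimmod by simp
  have evSW: "even (card SW)" using m4 by presburger
  have SWW: "SW \<subseteq> W" using spanSW span_superset by blast
  define s where "s = sum id SW"
  have "s \<in> span SW" unfolding s_def by (rule span_sum) (simp add: span_base)
  then have sW: "s \<in> W" using spanSW by simp
  have Qs: "Q s = 1"
    using Q_sum_gram[OF finSW QSW grSW] odd_choose2[OF m4] unfolding s_def by (simp add: of_nat_bit)
  have pws: "polar Q w s = 1" if "w \<in> SW" for w
  proof -
    have "polar Q w s = of_nat (card (SW - {w}))"
      unfolding s_def by (rule polar_sum_gram[OF finSW subset_refl that grSW])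
    moreover have "card (SW - {w}) = card SW - 1" using that finSW by simp
    moreover have "odd (card SW - 1)" using m4 by presburger
    ultimately show ?thesis by (simp add: of_nat_bit)
  qed
  have perpW: "polar Q w x = 0" if "w \<in> W" "x \<in> {a,b,c,d',g,h}" for w x
    using inperp that unfolding perp_def by blast
  have sp: "polar Q s a = 0" "polar Q s b = 0" "polar Q s c = 0" "polar Q s d' = 0"
    "polar Q s g = 0" "polar Q s h = 0" using perpW[OF sW] by auto
  have sp2: "polar Q a s = 0" "polar Q b s = 0" "polar Q c s = 0" "polar Q d' s = 0"
    "polar Q g s = 0" "polar Q h s = 0" using sp polar_sym by metis+
  have hq: "Q a = 0" "Q b = 0" "Q c = 0" "Q d' = 0" "Q g = 0" "Q h = 0"
    using hp1 hp2 hp3 unfolding hyperbolic_pair_def by auto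
  have hpol: "polar Q a b = 1" "polar Q c d' = 1" "polar Q g h = 1"
    using hp1 hp2 hp3 unfolding hyperbolic_pair_def by auto
  have hpol2: "polar Q b a = 1" "polar Q d' c = 1" "polar Q h g = 1"
    using hpol polar_sym by metis+
  have fwd: "polar Q a c = 0" "polar Q a d' = 0" "polar Q b c = 0" "polar Q b d' = 0"
    "polar Q a g = 0" "polar Q a h = 0" "polar Q b g = 0" "polar Q b h = 0"
    "polar Q c g = 0" "polar Q c h = 0" "polar Q d' g = 0" "polar Q d' h = 0"
    using perp12 perp13 perp23 by auto
  have rev: "polar Q c a = 0" "polar Q d' a = 0" "polar Q c b = 0" "polar Q d' b = 0"
    "polar Q g a = 0" "polar Q h a = 0" "polar Q g b = 0" "polar Q h b = 0"
    "polar Q g c = 0" "polar Q h c = 0" "polar Q g d' = 0" "polar Q h d' = 0"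
    using fwd polar_sym by metis+
  note F = Qadd polar_addL polar_addR polar_self Qs sp sp2 hq hpol hpol2 fwd rev
  define y1 where "y1 = d' + g + h"
  define y2 where "y2 = c + g + h"
  define y3 where "y3 = b + c + d'"
  define y4 where "y4 = a + c + d'"
  define y5 where "y5 = a + b + h"
  define y6 where "y6 = a + b + g"
  note yd = y1_def y2_def y3_def y4_def y5_def y6_def
  have QN: "Q (s + y1) = 0" "Q (s + y2) = 0" "Q (s + y3) = 0" "Q (s + y4) = 0"
    "Q (s + y5) = 0" "Q (s + y6) = 0" by (simp_all add: yd F)
  have Qy: "Q y1 = 1" "Q y2 = 1" "Q y3 = 1" "Q y4 = 1" "Q y5 = 1" "Q y6 = 1"
    by (simp_all add: yd F)
  have GN: "polar Q (s + y1) (s + y2) = 1" "polar Q (s + y1) (s + y3) = 1"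
    "polar Q (s + y1) (s + y4) = 1" "polar Q (s + y1) (s + y5) = 1" "polar Q (s + y1) (s + y6) = 1"
    "polar Q (s + y2) (s + y1) = 1" "polar Q (s + y2) (s + y3) = 1"
    "polar Q (s + y2) (s + y4) = 1" "polar Q (s + y2) (s + y5) = 1" "polar Q (s + y2) (s + y6) = 1"
    "polar Q (s + y3) (s + y1) = 1" "polar Q (s + y3) (s + y2) = 1"
    "polar Q (s + y3) (s + y4) = 1" "polar Q (s + y3) (s + y5) = 1" "polar Q (s + y3) (s + y6) = 1"
    "polar Q (s + y4) (s + y1) = 1" "polar Q (s + y4) (s + y2) = 1"
    "polar Q (s + y4) (s + y3) = 1" "polar Q (s + y4) (s + y5) = 1" "polar Q (s + y4) (s + y6) = 1"
    "polar Q (s + y5) (s + y1) = 1" "polar Q (s + y5) (s + y2) = 1"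
    "polar Q (s + y5) (s + y3) = 1" "polar Q (s + y5) (s + y4) = 1" "polar Q (s + y5) (s + y6) = 1"
    "polar Q (s + y6) (s + y1) = 1" "polar Q (s + y6) (s + y2) = 1"
    "polar Q (s + y6) (s + y3) = 1" "polar Q (s + y6) (s + y4) = 1" "polar Q (s + y6) (s + y5) = 1"
    by (simp_all add: yd F)
  have Gy: "polar Q w y1 = 0" "polar Q w y2 = 0" "polar Q w y3 = 0"
    "polar Q w y4 = 0" "polar Q w y5 = 0" "polar Q w y6 = 0" if "w \<in> SW" for w
  proof -
    have "polar Q w a = 0" "polar Q w b = 0" "polar Q w c = 0" "polar Q w d' = 0"
      "polar Q w g = 0" "polar Q w h = 0" using perpW that SWW by auto
    then show "polar Q w y1 = 0" "polar Q w y2 = 0" "polar Q w y3 = 0"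
      "polar Q w y4 = 0" "polar Q w y5 = 0" "polar Q w y6 = 0" by (simp_all add: yd polar_addR)
  qed
  have GW: "polar Q w (s + y1) = 1" "polar Q w (s + y2) = 1" "polar Q w (s + y3) = 1"
    "polar Q w (s + y4) = 1" "polar Q w (s + y5) = 1" "polar Q w (s + y6) = 1"
    "polar Q (s + y1) w = 1" "polar Q (s + y2) w = 1" "polar Q (s + y3) w = 1"
    "polar Q (s + y4) w = 1" "polar Q (s + y5) w = 1" "polar Q (s + y6) w = 1"
    if "w \<in> SW" for w
    using Gy[OF that] pws[OF that] polar_sym[of w] by (simp_all add: polar_addR polar_addL)
  have bk: "(s + y) + s = y" for y by (metis add.commute cancel1)
  have disj: "s + y \<notin> SW" if "Q y = 1" "\<forall>w\<in>SW. polar Q w y = 0" for y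
  proof
    assume "s + y \<in> SW"
    then have "(s + y) + s \<in> W" using SWW sW sub by (meson subset_iff subspace_add)
    then have "y \<in> span SW" using bk spanSW by simp
    then have "y = 0" using rad0[OF finSW evSW grSW] that(2) by blast
    then show False using that(1) Q0 by simp
  qed
  define N where "N = {s + y1, s + y2, s + y3, s + y4, s + y5, s + y6}"
  define S where "S = SW \<union> N"
  have cN: "card N = 6" unfolding N_def using GN[THEN polar1_neq] by simp
  have dN: "SW \<inter> N = {}" unfolding N_def using disj Qy Gy by auto
  have finS: "finite S" unfolding S_def N_def using finSW by simp
  have evS: "even (card S)" unfolding S_def
    using card_Un_disjoint[OF finSW _ dN] cN evSW unfolding N_def by simp
  have QS: "\<forall>v\<in>S. Q v = 0" unfolding S_def N_def using QSW QN by auto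
  have grS: "\<forall>u\<in>S. \<forall>v\<in>S. u \<noteq> v \<longrightarrow> polar Q u v = 1"
    unfolding S_def N_def using grSW GN GW by auto
  have indS: "\<not> dependent S" by (rule indep[OF finS evS grS])
  let ?H = "W \<union> {a, b, c, d', g, h}"
  have "S \<subseteq> span ?H"
  proof -
    have "SW \<subseteq> span ?H" using SWW span_superset by blast
    moreover have "s \<in> span ?H" using sW by (simp add: span_base)
    moreover have "x \<in> span ?H" if "x \<in> {a, b, c, d', g, h}" for x using that by (auto intro: span_base)
    ultimately show ?thesis unfolding S_def N_def yd by (auto intro!: span_add)
  qed
  then have sub1: "span S \<subseteq> span ?H" using span_minimal subspace_span by blast
  have sS: "s \<in> span S" using \<open>s \<in> span SW\<close> span_mono[of SW S] unfolding S_def by blast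
  have ysp: "y \<in> span S" if "s + y \<in> S" for y
  proof -
    have "(s + y) + s \<in> span S" using that sS by (simp add: span_base span_add)
    then show ?thesis using bk by simp
  qed
  have ys: "y1 \<in> span S" "y2 \<in> span S" "y3 \<in> span S" "y4 \<in> span S" "y5 \<in> span S" "y6 \<in> span S"
    by (rule ysp, simp add: S_def N_def)+
  have eqs: "a = y4 + y1 + y2" "b = y3 + y1 + y2" "c = y2 + y5 + y6" "d' = y1 + y5 + y6"
    "g = y6 + y3 + y4" "h = y5 + y3 + y4"
    by (simp_all add: yd add.assoc add.left_commute add.commute cancel1 two0)
  have "?H \<subseteq> span S"
  proof -
    have "W \<subseteq> span S" using spanSW span_mono[of SW S] unfolding S_def by blast
    moreover have "{a, b, c, d', g, h} \<subseteq> span S"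
      using ys by (subst eqs, auto intro!: span_add)+
    ultimately show ?thesis by blast
  qed
  then have sub2: "span ?H \<subseteq> span S" using span_minimal subspace_span by blast
  have "symmetric_basis scale Q (span ?H) S"
    unfolding symmetric_basis_def using indS sub1 sub2 QS grS by blast
  then show ?thesis unfolding has_symmetric_basis_def by blast
qed

end
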